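(* Let $T=\bigcup_{j\in J}T_j$ be a finite or countable disjoint union of second-countable Hausdorff manifolds, and let $f:T\to\mathbb{R}^l$ be continuously differentiable. Call $u\in\mathbb{R}^l$ a non-invertible value of $f$ if there exist $t_1\neq t_2$ in $T$ with $f(t_1)=f(t_2)=u$. Suppose there is a sequence $f_n:T\to\mathbb{R}^l$ of continuously differentiable injective functions converging to $f$ uniformly on compact sets. Then the set of non-invertible values of $f$ has Lebesgue measure zero. *)

theory Defs
  imports "HOL-Analysis.Analysis"
begin

definition C1_on :: "('n::euclidean_space \<Rightarrow> 'm::real_normed_vector) \<Rightarrow> 'n set \<Rightarrow> bool" where
  "C1_on g S \<longleftrightarrow>
     (\<exists>D. (\<forall>x\<in>S. (g has_derivative blinfun_apply (D x)) (at x within S)) \<and> continuous_on S D)"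

text \<open>A chart (U, V, phi) of the topological space X: U is open in X, V is a linear
  subspace of the Euclidean space 'n (a copy of R^k, k = dim V), and phi is a
  homeomorphism from U onto an open subset of V.\<close>
definition is_chart :: "'a topology \<Rightarrow> ('a set \<times> 'n::euclidean_space set \<times> ('a \<Rightarrow> 'n)) \<Rightarrow> bool" where
  "is_chart X c \<longleftrightarrow> (case c of (U, V, \<phi>) \<Rightarrow>
      openin X U \<and> subspace V \<and> \<phi> ` U \<subseteq> V \<and>
      openin (top_of_set V) (\<phi> ` U) \<and>
      homeomorphic_map (subtopology X U) (top_of_set (\<phi> ` U)) \<phi>)"

definition C1_atlas :: "'a topology \<Rightarrow> ('a set \<times> 'n::euclidean_space set \<times> ('a \<Rightarrow> 'n)) set \<Rightarrow> bool" where
  "C1_atlas X A \<longleftrightarrow>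
     (\<forall>c\<in>A. is_chart X c) \<and>
     topspace X \<subseteq> (\<Union>c\<in>A. fst c) \<and>
     (\<forall>(U, V, \<phi>)\<in>A. \<forall>(U', V', \<psi>)\<in>A. C1_on (\<psi> \<circ> inv_into U \<phi>) (\<phi> ` (U \<inter> U')))"

definition C1_manifold :: "'a topology \<Rightarrow> ('a set \<times> 'n::euclidean_space set \<times> ('a \<Rightarrow> 'n)) set \<Rightarrow> bool" where
  "C1_manifold X A \<longleftrightarrow> Hausdorff_space X \<and> second_countable X \<and> C1_atlas X A"

definition C1_map :: "'a topology \<Rightarrow> ('a set \<times> 'n::euclidean_space set \<times> ('a \<Rightarrow> 'n)) set
     \<Rightarrow> ('a \<Rightarrow> 'm::real_normed_vector) \<Rightarrow> bool" where
  "C1_map X A f \<longleftrightarrow> (\<forall>(U, V, \<phi>)\<in>A. C1_on (f \<circ> inv_into U \<phi>) (\<phi> ` U))"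

definition noninvertible_values :: "'a set \<Rightarrow> ('a \<Rightarrow> 'b) \<Rightarrow> 'b set" where
  "noninvertible_values T f = {u. \<exists>t1\<in>T. \<exists>t2\<in>T. t1 \<noteq> t2 \<and> f t1 = u \<and> f t2 = u}"

end

theory Submission
  imports Defs
begin


typedef 'a wo = "UNIV :: 'a set" by auto

instance wo :: (finite) finite
proof
  have "UNIV = Abs_wo ` UNIV" by (metis Rep_wo_inverse surj_def)
  moreover have "finite (range (Abs_wo :: 'a \<Rightarrow> 'a wo))" by simp
  ultimately show "finite (UNIV :: 'a wo set)" by metis
qed

instantiation wo :: (finite) linorder
begin
definition less_eq_wo :: "'a wo \<Rightarrow> 'a wo \<Rightarrow> bool" where
  "less_eq_wo x y \<longleftrightarrow> to_nat (Rep_wo x) \<le> to_nat (Rep_wo y)"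
definition less_wo :: "'a wo \<Rightarrow> 'a wo \<Rightarrow> bool" where
  "less_wo x y \<longleftrightarrow> to_nat (Rep_wo x) < to_nat (Rep_wo y)"
instance
proof
  fix x y z :: "'a wo"
  show "(x < y) = (x \<le> y \<and> \<not> y \<le> x)" by (auto simp: less_eq_wo_def less_wo_def)
  show "x \<le> x" by (simp add: less_eq_wo_def)
  show "x \<le> y \<Longrightarrow> y \<le> z \<Longrightarrow> x \<le> z" by (simp add: less_eq_wo_def)
  show "x \<le> y \<Longrightarrow> y \<le> x \<Longrightarrow> x = y"
    by (simp add: less_eq_wo_def Rep_wo_inject)
  show "x \<le> y \<or> y \<le> x" by (auto simp: less_eq_wo_def)
qed
end

instance wo :: (finite) wellorder
proof
  fix P :: "'a wo \<Rightarrow> bool" and a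
  assume H: "\<And>x. (\<And>y. y < x \<Longrightarrow> P y) \<Longrightarrow> P x"
  have "\<And>n x. to_nat (Rep_wo x) = n \<Longrightarrow> P x"
  proof -
    fix n show "\<And>x. to_nat (Rep_wo x) = n \<Longrightarrow> P x"
      by (induction n rule: less_induct) (metis H less_wo_def)
  qed
  then show "P a" by blast
qed

lemma card_wo: "CARD('a::finite wo) = CARD('a)"
  using type_definition.card[OF type_definition_wo] by simp

lemma Sard_gen:
  fixes h :: "real^'l::finite \<Rightarrow> real^'l"
  assumes der: "\<And>x. x\<in>S \<Longrightarrow> (h has_derivative h' x) (at x within S)"
    and ns: "\<And>x. x \<in> S \<Longrightarrow> \<not> surj (h' x)"
  shows "negligible (h ` S)"
proof -
  define P :: "real^'l \<Rightarrow> real^('l wo)" where "P = (\<lambda>x. \<chi> i. x $ Rep_wo i)"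
  define Q :: "real^('l wo) \<Rightarrow> real^'l" where "Q = (\<lambda>y. \<chi> i. y $ Abs_wo i)"
  have QP[simp]: "Q (P x) = x" for x by (simp add: P_def Q_def Abs_wo_inverse vec_eq_iff)
  have PQ[simp]: "P (Q y) = y" for y by (simp add: P_def Q_def Rep_wo_inverse vec_eq_iff)
  have linP: "linear P" unfolding P_def by (auto simp: linear_iff vec_eq_iff)
  have linQ: "linear Q" unfolding Q_def by (auto simp: linear_iff vec_eq_iff)
  define h2 where "h2 = P \<circ> h \<circ> Q"
  define S2 where "S2 = P ` S"
  have QS2: "Q ` S2 = S" by (force simp: S2_def image_iff)
  have der2: "(h2 has_derivative (P \<circ> h' (Q y) \<circ> Q)) (at y within S2)" if "y \<in> S2" for y
  proof -
    have "Q y \<in> S" using that QS2 by blast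
    have "(Q has_derivative Q) (at y within S2)"
      using linQ by (simp add: linear_imp_has_derivative has_derivative_at_withinI)
    moreover have "(h has_derivative h' (Q y)) (at (Q y) within Q ` S2)"
      using der[OF \<open>Q y \<in> S\<close>] QS2 by simp
    ultimately have "(h \<circ> Q has_derivative h' (Q y) \<circ> Q) (at y within S2)"
      by (rule diff_chain_within)
    moreover have "(P has_derivative P) (at ((h \<circ> Q) y) within (h \<circ> Q) ` S2)"
      using linP by (simp add: linear_imp_has_derivative has_derivative_at_withinI)
    ultimately have "(P \<circ> (h \<circ> Q) has_derivative P \<circ> (h' (Q y) \<circ> Q)) (at y within S2)"
      by (rule diff_chain_within)
    then show ?thesis by (simp add: h2_def comp_assoc)
  qed
  have rk: "rank (matrix (P \<circ> h' (Q y) \<circ> Q)) < CARD('l wo)" if "y \<in> S2" for y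
  proof -
    let ?F = "P \<circ> h' (Q y) \<circ> Q"
    have "Q y \<in> S" using that QS2 by blast
    have "linear (h' (Q y))" using der[OF \<open>Q y \<in> S\<close>]
      by (simp add: has_derivative_linear)
    then have linF: "linear ?F" using linP linQ by (simp add: linear_compose)
    have "range ?F \<noteq> UNIV"
    proof
      assume "range ?F = UNIV"
      have "surj (h' (Q y))" unfolding surj_def
      proof
        fix z
        obtain w where "P z = ?F w" using \<open>range ?F = UNIV\<close> by (metis UNIV_I imageE)
        then have "z = h' (Q y) (Q w)" by (metis QP comp_apply)
        then show "\<exists>x. z = h' (Q y) x" by blast
      qed
      then show False using ns[OF \<open>Q y \<in> S\<close>] by blast
    qed
    moreover have "subspace (range ?F)" by (rule linear_subspace_image[OF linF subspace_UNIV])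
    ultimately have "dim (range ?F) < DIM(real^'l wo)"
    proof -
      have "dim (range ?F) \<le> DIM(real^'l wo)" by (rule dim_subset_UNIV)
      moreover have "dim (range ?F) \<noteq> DIM(real^'l wo)"
      proof -
        have "span (range ?F) = range ?F" using span_eq_iff \<open>subspace (range ?F)\<close> by blast
        then show ?thesis using dim_eq_full[of "range ?F"] \<open>range ?F \<noteq> UNIV\<close> by argo
      qed
      ultimately show ?thesis by simp
    qed
    then show ?thesis
      by (simp only: rank_dim_range matrix_vector_mul(2)[OF linF]) simp
  qed
  have "negligible (h2 ` S2)"
    by (rule baby_Sard[OF order_refl der2 rk]) auto
  moreover have "h ` S = Q ` (h2 ` S2)"
    by (simp add: h2_def S2_def image_comp comp_def)
  moreover have "Q differentiable_on (h2 ` S2)"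
    using linQ by (simp add: linear_imp_differentiable_on)
  ultimately show ?thesis
    using negligible_differentiable_image_negligible[of "h2 ` S2" Q] by (simp add: card_wo)
qed



lemma perturb:
  fixes h :: "'a::euclidean_space \<Rightarrow> 'a"
  assumes der: "(h has_derivative A) (at x0)" and linB: "linear B"
    and BA: "\<And>y. B (A y) = y" and AB: "\<And>y. A (B y) = y" and R: "R > 0"
  shows "\<exists>r>0. r \<le> R \<and> (\<exists>e>0. \<forall>H. continuous_on (cball x0 r) H \<longrightarrow>
            (\<forall>x\<in>cball x0 r. norm (H x - h x) < e) \<longrightarrow> h x0 \<in> H ` cball x0 r)"
proof -
  obtain Bn where Bn: "Bn > 0" "\<And>y. norm (B y) \<le> Bn * norm y"
    using linear_bounded_pos[OF linB] by metis
  have linA: "linear A" using der has_derivative_linear by blast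
  have pos: "1 / (2*Bn) > 0" using Bn(1) by simp
  have "\<forall>e>0. \<exists>d>0. \<forall>y. norm (y - x0) < d \<longrightarrow> norm (h y - h x0 - A (y - x0)) \<le> e * norm (y - x0)"
    using der unfolding has_derivative_at_alt by (rule conjunct2)
  from this[rule_format, OF pos] obtain d where
    d: "d > 0" "\<And>y. norm (y - x0) < d \<Longrightarrow> norm (h y - h x0 - A (y - x0)) \<le> (1 / (2*Bn)) * norm (y - x0)"
    by auto
  define r where "r = min R (d/2)"
  have r: "r > 0" "r \<le> R" "r < d" using R d by (auto simp: r_def)
  define e where "e = r / (2*Bn)"
  have e: "e > 0" using r Bn by (simp add: e_def)
  have main: "h x0 \<in> H ` cball x0 r" if contH: "continuous_on (cball x0 r) H"
      and close: "\<forall>x\<in>cball x0 r. norm (H x - h x) < e" for H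
  proof -
    define F where "F = (\<lambda>x. x - B (H x - h x0))"
    have contF: "continuous_on (cball x0 r) F"
    proof -
      have "continuous_on (cball x0 r) (\<lambda>x. H x - h x0)" using contH by (intro continuous_on_diff continuous_on_const)
      then have "continuous_on (cball x0 r) (\<lambda>x. B (H x - h x0))" by (rule linear_continuous_on_compose[OF _ linB])
      then show ?thesis unfolding F_def by (intro continuous_on_diff continuous_on_id)
    qed
    have Fim: "F \<in> cball x0 r \<rightarrow> cball x0 r"
    proof
      fix x assume x: "x \<in> cball x0 r"
      then have nx: "norm (x - x0) \<le> r" by (simp add: dist_norm norm_minus_commute)
      have eq: "F x - x0 = B (A (x - x0) - (h x - h x0)) - B (H x - h x)"
      proof -
        have a: "B (A (x - x0) - (h x - h x0)) = (x - x0) - B (h x - h x0)"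
          using linear_diff[OF linB] BA by simp
        have b: "B (H x - h x0) = B (h x - h x0) + B (H x - h x)"
          using linear_add[OF linB, of "h x - h x0" "H x - h x"] by simp
        show ?thesis unfolding F_def a b by simp
      qed
      have "norm (B (A (x - x0) - (h x - h x0))) \<le> Bn * norm (A (x - x0) - (h x - h x0))"
        by (rule Bn(2))
      also have "\<dots> = Bn * norm (h x - h x0 - A (x - x0))"
        by (simp add: norm_minus_commute)
      also have "\<dots> \<le> Bn * ((1 / (2*Bn)) * norm (x - x0))"
        using d(2)[of x] nx r(3) Bn(1) by (intro mult_left_mono) auto
      also have "\<dots> \<le> r/2" using nx Bn(1) by (simp add: field_simps)
      finally have 1: "norm (B (A (x - x0) - (h x - h x0))) \<le> r/2" .
      have "norm (B (H x - h x)) \<le> Bn * norm (H x - h x)" by (rule Bn(2))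
      also have "\<dots> \<le> Bn * e"
      proof -
        have "norm (H x - h x) < e" using close x by blast
        then show ?thesis using Bn(1) by (intro mult_left_mono) auto
      qed
      also have "\<dots> = r/2" using Bn(1) by (simp add: e_def)
      finally have 2: "norm (B (H x - h x)) \<le> r/2" .
      have "norm (F x - x0) \<le> r"
        unfolding eq using 1 2 norm_triangle_ineq4[of "B (A (x - x0) - (h x - h x0))" "B (H x - h x)"]
        by linarith
      then show "F x \<in> cball x0 r" by (simp add: dist_norm norm_minus_commute)
    qed
    obtain x where x: "x \<in> cball x0 r" "F x = x"
      using brouwer[OF compact_cball convex_cball _ contF Fim] r(1) by auto
    then have "B (H x - h x0) = 0" by (simp add: F_def)
    then have "A (B (H x - h x0)) = 0" using linA by (simp add: linear_0)
    then have "H x = h x0" using AB by simp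
    then show "h x0 \<in> H ` cball x0 r" using x(1) by (metis imageI)
  qed
  show ?thesis using r(1) r(2) e main by blast
qed



definition goodB :: "'a topology \<Rightarrow> ('a \<Rightarrow> 'b::metric_space) \<Rightarrow> (nat \<Rightarrow> 'a \<Rightarrow> 'b) \<Rightarrow> 'a set \<Rightarrow> 'b set \<Rightarrow> bool" where
  "goodB X f fs U B \<longleftrightarrow> (\<forall>t\<in>U. f t \<notin> B \<longrightarrow> (\<forall>Ob. openin X Ob \<and> t \<in> Ob \<longrightarrow>
      (\<exists>K. compactin X K \<and> K \<subseteq> Ob \<and> (\<forall>\<^sub>F n in sequentially. f t \<in> fs n ` K))))"

lemma lin_iso:
  fixes A :: "'a::euclidean_space \<Rightarrow> 'a"
  assumes "linear A" "surj A"
  obtains B where "linear B" "\<And>y. B (A y) = y" "\<And>y. A (B y) = y"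
  using linear_surjective_isomorphism[OF assms] by blast

lemma chart_lemma:
  fixes X :: "'a topology" and f :: "'a \<Rightarrow> real^'l::finite" and fs :: "nat \<Rightarrow> 'a \<Rightarrow> real^'l"
    and \<phi> :: "'a \<Rightarrow> 'n::euclidean_space"
  assumes U: "openin X U" and V: "subspace V" and WV: "\<phi> ` U \<subseteq> V"
    and Wo: "openin (top_of_set V) (\<phi> ` U)"
    and hom: "homeomorphic_map (subtopology X U) (top_of_set (\<phi> ` U)) \<phi>"
    and Cf: "C1_on (f \<circ> inv_into U \<phi>) (\<phi> ` U)"
    and Cfs: "\<And>n. C1_on (fs n \<circ> inv_into U \<phi>) (\<phi> ` U)"
    and inj: "inj_on (fs 0) U"
    and unif: "\<And>K. compactin X K \<Longrightarrow> uniform_limit K fs f sequentially"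
  shows "\<exists>B. negligible B \<and> goodB X f fs U B"
proof -
  define W where "W = \<phi> ` U"
  define \<psi> where "\<psi> = inv_into U \<phi>"
  have Usub: "U \<subseteq> topspace X" using U by (simp add: openin_subset)
  have topU: "topspace (subtopology X U) = U" using Usub by auto
  have injphi: "inj_on \<phi> U" using homeomorphic_imp_injective_map[OF hom] topU by simp
  have psiphi: "\<And>t. t \<in> U \<Longrightarrow> \<psi> (\<phi> t) = t" using injphi by (simp add: \<psi>_def)
  have phipsi: "\<And>y. y \<in> W \<Longrightarrow> \<phi> (\<psi> y) = y \<and> \<psi> y \<in> U"
    by (auto simp: \<psi>_def W_def f_inv_into_f inv_into_into)
  obtain g where g: "homeomorphic_maps (subtopology X U) (top_of_set W) \<phi> g"
    using hom homeomorphic_map_maps W_def by blast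
  have contg: "continuous_map (top_of_set W) (subtopology X U) g"
    using g by (simp add: homeomorphic_maps_def)
  have gpsi: "g y = \<psi> y" if "y \<in> W" for y
  proof -
    have "g y \<in> U" using contg that topU by (auto simp: continuous_map_def Pi_iff)
    moreover have "\<phi> (g y) = y" using g that by (simp add: homeomorphic_maps_def)
    ultimately show ?thesis using psiphi[of "g y"] by simp
  qed
  have contpsi: "continuous_map (top_of_set W) X \<psi>"
    using continuous_map_into_fulltopology[OF continuous_map_eq[OF contg]] gpsi by simp
  obtain Df where Df: "\<And>y. y \<in> W \<Longrightarrow> (f \<circ> \<psi> has_derivative blinfun_apply (Df y)) (at y within W)"
    using Cf unfolding C1_on_def W_def \<psi>_def by blast
  have contfs: "continuous_on W (fs n \<circ> \<psi>)" for n
  proof -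
    obtain D where "\<And>y. y \<in> W \<Longrightarrow> (fs n \<circ> \<psi> has_derivative blinfun_apply (D y)) (at y within W)"
      using Cfs[of n] unfolding C1_on_def W_def \<psi>_def by blast
    then show ?thesis by (rule has_derivative_continuous_on)
  qed
  show ?thesis
  proof (cases "dim V \<le> CARD('l)")
    case False
    have "U = {}"
    proof (rule ccontr)
      assume "U \<noteq> {}"
      then have "W \<noteq> {}" by (simp add: W_def)
      have "inj_on (fs 0 \<circ> \<psi>) W"
        using inj phipsi unfolding inj_on_def by (metis comp_apply)
      then have "dim V \<le> dim (UNIV :: (real^'l) set)"
        using invariance_of_dimension_subspaces[of V W UNIV "fs 0 \<circ> \<psi>"] Wo V contfs \<open>W \<noteq> {}\<close>
        by (simp add: W_def)
      then show False using False by simp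
    qed
    then show ?thesis by (auto simp: goodB_def)
  next
    case True
    obtain V0 :: "(real^'l) set" where V0: "subspace V0" "dim V0 = dim V"
      using choose_subspace_of_subspace[of "dim V" "UNIV :: (real^'l) set"] True by auto
    obtain L :: "real^'l \<Rightarrow> 'n" and L' where L: "linear L" "linear L'" "L ` V0 = V" "L' ` V = V0"
      "\<And>x. x \<in> V0 \<Longrightarrow> L' (L x) = x" "\<And>x. x \<in> V \<Longrightarrow> L (L' x) = x"
    proof (rule isometries_subspaces[OF V0(1) V V0(2)])
      fix L :: "real^'l \<Rightarrow> 'n" and L' assume a: "linear L" "linear L'" "L ` V0 = V" "L' ` V = V0"
        "\<And>x. x \<in> V0 \<Longrightarrow> norm (L x) = norm x" "\<And>x. x \<in> V \<Longrightarrow> norm (L' x) = norm x"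
        "\<And>x. x \<in> V0 \<Longrightarrow> L' (L x) = x" "\<And>x. x \<in> V \<Longrightarrow> L (L' x) = x"
      show thesis by (rule that[of L L']) (fact a)+
    qed
    define S where "S = L' ` W"
    define h where "h = f \<circ> \<psi> \<circ> L"
    have WsubV: "W \<subseteq> V" using WV by (simp add: W_def)
    have LS: "L ` S = W" using L(6) WsubV by (force simp: S_def image_iff)
    have SV0: "S \<subseteq> V0" using L(4) WsubV by (auto simp: S_def)
    have derh: "(h has_derivative (blinfun_apply (Df (L x)) \<circ> L)) (at x within S)" if "x \<in> S" for x
    proof -
      have "(L has_derivative L) (at x within S)"
        using L(1) by (simp add: linear_imp_has_derivative has_derivative_at_withinI)
      moreover have "(f \<circ> \<psi> has_derivative blinfun_apply (Df (L x))) (at (L x) within L ` S)"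
        using Df[of "L x"] LS that by auto
      ultimately show ?thesis unfolding h_def comp_assoc[symmetric]
        by (rule diff_chain_within)
    qed
    have ht: "h (L' (\<phi> t)) = f t" "L' (\<phi> t) \<in> S" if "t \<in> U" for t
    proof -
      have "\<phi> t \<in> W" using that by (simp add: W_def)
      then show "h (L' (\<phi> t)) = f t" using L(6) WsubV psiphi that by (auto simp: h_def)
      show "L' (\<phi> t) \<in> S" using \<open>\<phi> t \<in> W\<close> by (simp add: S_def)
    qed
    show ?thesis
    proof (cases "dim V < CARD('l)")
      case True
      have "negligible V0" using V0(2) True by (intro negligible_lowdim) simp
      then have "negligible S" using SV0 negligible_subset by blast
      moreover have "h differentiable_on S"
        using derh by (auto simp: differentiable_on_def differentiable_def)
      ultimately have "negligible (h ` S)"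
        by (rule negligible_differentiable_image_negligible[OF order_refl])
      moreover have "goodB X f fs U (h ` S)"
        unfolding goodB_def
      proof (intro ballI impI)
        fix t assume t: "t \<in> U" "f t \<notin> h ` S"
        have "f t \<in> h ` S" using image_eqI[of "f t" h "L' (\<phi> t)" S] ht[OF t(1)] by simp
        with t(2) show "\<forall>Ob. openin X Ob \<and> t \<in> Ob \<longrightarrow> (\<exists>K. compactin X K \<and> K \<subseteq> Ob \<and> (\<forall>\<^sub>F n in sequentially. f t \<in> fs n ` K))"
          by blast
      qed
      ultimately show ?thesis by blast
    next
      case False
      then have dV: "dim V0 = DIM(real^'l)" using V0(2) True by simp
      have sV0: "span V0 = V0" using V0(1) span_eq_iff by blast
      have "span V0 = UNIV" using dim_eq_full[of V0] dV by simp
      then have V0U: "V0 = UNIV" using sV0 by argo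
      obtain O' where O': "open O'" "W = V \<inter> O'"
        using Wo unfolding W_def by (auto simp: openin_open)
      have LV: "L x \<in> V" for x using L(3) V0U by blast
      have Seq: "S = L -` O'"
      proof
        show "S \<subseteq> L -` O'" using L(6) O'(2) by (auto simp: S_def)
        show "L -` O' \<subseteq> S"
        proof
          fix x assume "x \<in> L -` O'"
          then have "L x \<in> W" using LV O'(2) by auto
          moreover have "x = L' (L x)" using L(5) V0U by simp
          ultimately show "x \<in> S" unfolding S_def by blast
        qed
      qed
      have bl: "bounded_linear L" using L(1) by (simp add: linear_conv_bounded_linear)
      have Sopen: "open S" unfolding Seq
        by (rule continuous_open_vimage[OF O'(1)]) (simp add: linear_continuous_at bl)
      define Cr where "Cr = {x \<in> S. \<not> surj (blinfun_apply (Df (L x)) \<circ> L)}"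
      have negB: "negligible (h ` Cr)"
      proof (rule Sard_gen)
        fix x assume "x \<in> Cr"
        then show "(h has_derivative (blinfun_apply (Df (L x)) \<circ> L)) (at x within Cr)"
          using derh[of x] by (auto simp: Cr_def intro: has_derivative_subset)
        show "\<not> surj (blinfun_apply (Df (L x)) \<circ> L)" using \<open>x \<in> Cr\<close> by (simp add: Cr_def)
      qed
      have contL: "continuous_map (top_of_set S) (top_of_set W) L"
        using LS by (auto simp: continuous_map_in_subtopology linear_continuous_on bl)
      have contpl: "continuous_map (top_of_set S) X (\<psi> \<circ> L)"
        by (rule continuous_map_compose[OF contL contpsi])
      have "goodB X f fs U (h ` Cr)"
        unfolding goodB_def
      proof (intro ballI impI allI)
        fix t Ob assume tU: "t \<in> U" and ftB: "f t \<notin> h ` Cr" and Ob: "openin X Ob \<and> t \<in> Ob"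
        define x0 where "x0 = L' (\<phi> t)"
        have x0S: "x0 \<in> S" and hx0: "h x0 = f t" using ht[OF tU] by (auto simp: x0_def)
        have Lx0: "L x0 = \<phi> t" using L(6) WsubV tU by (auto simp: x0_def W_def)
        define A where "A = blinfun_apply (Df (L x0)) \<circ> L"
        have "x0 \<notin> Cr" using ftB hx0 by (metis imageI)
        then have surjA: "surj A" using x0S by (simp add: Cr_def A_def)
        have derA: "(h has_derivative A) (at x0)"
          using derh[OF x0S] at_within_open[OF x0S Sopen] by (simp add: A_def)
        have linA: "linear A" using derA has_derivative_linear by blast
        obtain Bi where Bi: "linear Bi" "\<And>y. Bi (A y) = y" "\<And>y. A (Bi y) = y"
          using lin_iso[OF linA surjA] by blast
        define P where "P = {x \<in> topspace (top_of_set S). (\<psi> \<circ> L) x \<in> Ob}"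
        have "openin (top_of_set S) P"
          unfolding P_def using Ob by (intro openin_continuous_map_preimage[OF contpl]) auto
        then have "open P" using Sopen openin_open_trans by blast
        moreover have "x0 \<in> P" using x0S Lx0 psiphi[OF tU] Ob by (simp add: P_def)
        ultimately obtain R where R: "R > 0" "cball x0 R \<subseteq> P"
          using open_contains_cball by blast
        obtain r e where re: "r > 0" "r \<le> R" "e > 0"
          and pert: "\<And>H. continuous_on (cball x0 r) H \<Longrightarrow>
            (\<forall>x\<in>cball x0 r. norm (H x - h x) < e) \<Longrightarrow> h x0 \<in> H ` cball x0 r"
          using perturb[OF derA Bi R(1)] by blast
        have cbP: "cball x0 r \<subseteq> P" using R(2) re(2) by (meson cball_subset_cball_iff dual_order.trans order_refl)
        then have cbS: "cball x0 r \<subseteq> S" by (auto simp: P_def)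
        define K where "K = (\<psi> \<circ> L) ` cball x0 r"
        have "compactin (top_of_set S) (cball x0 r)"
          using cbS by (simp add: compactin_subtopology)
        then have cK: "compactin X K" unfolding K_def by (rule image_compactin[OF _ contpl])
        have KOb: "K \<subseteq> Ob" using cbP by (auto simp: K_def P_def)
        have ev: "\<forall>\<^sub>F n in sequentially. \<forall>y\<in>K. dist (fs n y) (f y) < e"
          using unif[OF cK] re(3) by (simp add: uniform_limit_iff)
        have "\<forall>\<^sub>F n in sequentially. f t \<in> fs n ` K"
        proof (rule eventually_mono[OF ev])
          fix n assume close: "\<forall>y\<in>K. dist (fs n y) (f y) < e"
          have LW: "L ` cball x0 r \<subseteq> W" using cbS LS by blast
          have "continuous_on (cball x0 r) L" using bl by (simp add: linear_continuous_on)
          then have cH: "continuous_on (cball x0 r) (\<lambda>x. (fs n \<circ> \<psi>) (L x))"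
            by (rule continuous_on_compose2[OF contfs _ LW])
          have cl: "\<forall>x\<in>cball x0 r. norm ((\<lambda>x. (fs n \<circ> \<psi>) (L x)) x - h x) < e"
          proof
            fix x assume "x \<in> cball x0 r"
            then have "\<psi> (L x) \<in> K" by (simp add: K_def)
            then show "norm ((\<lambda>x. (fs n \<circ> \<psi>) (L x)) x - h x) < e"
              using close by (simp add: h_def dist_norm)
          qed
          have "h x0 \<in> (\<lambda>x. (fs n \<circ> \<psi>) (L x)) ` cball x0 r" by (rule pert[OF cH cl])
          then show "f t \<in> fs n ` K" using hx0 by (auto simp: K_def)
        qed
        then show "\<exists>K. compactin X K \<and> K \<subseteq> Ob \<and> (\<forall>\<^sub>F n in sequentially. f t \<in> fs n ` K)"
          using cK KOb by blast
      qed
      then show ?thesis using negB by blast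
    qed
  qed
qed



theorem lemma7:
  fixes X :: "'a topology" and J :: "'j set" and T :: "'j \<Rightarrow> 'a set"
    and A :: "'j \<Rightarrow> ('a set \<times> 'n::euclidean_space set \<times> ('a \<Rightarrow> 'n)) set"
    and f :: "'a \<Rightarrow> real ^ 'l" and fs :: "nat \<Rightarrow> 'a \<Rightarrow> real ^ 'l"
  assumes "countable J"
    and "disjoint_family_on T J"
    and "(\<Union>j\<in>J. T j) = topspace X"
    and "\<forall>j\<in>J. openin X (T j)"
    and "\<forall>j\<in>J. C1_manifold (subtopology X (T j)) (A j)"
    and "\<forall>j\<in>J. C1_map (subtopology X (T j)) (A j) f"
    and "\<forall>n. \<forall>j\<in>J. C1_map (subtopology X (T j)) (A j) (fs n)"
    and "\<forall>n. inj_on (fs n) (topspace X)"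
    and "\<forall>K. compactin X K \<longrightarrow> uniform_limit K fs f sequentially"
  shows "noninvertible_values (topspace X) f \<in> null_sets lebesgue"
proof -
  have Tsub: "\<And>j. j \<in> J \<Longrightarrow> T j \<subseteq> topspace X" using assms(3) by blast
  have topT: "\<And>j. j \<in> J \<Longrightarrow> topspace (subtopology X (T j)) = T j" using Tsub by auto
  have chart: "\<exists>B. negligible B \<and> goodB X f fs (fst c) B" if j: "j \<in> J" and c: "c \<in> A j" for j c
  proof -
    obtain U V \<phi> where cdef: "c = (U, V, \<phi>)" by (cases c) auto
    have "is_chart (subtopology X (T j)) (U, V, \<phi>)"
      using assms(5) j c cdef by (auto simp: C1_manifold_def C1_atlas_def)
    then have U1: "openin (subtopology X (T j)) U" and V: "subspace V" and WV: "\<phi> ` U \<subseteq> V"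
      and Wo: "openin (top_of_set V) (\<phi> ` U)"
      and hom1: "homeomorphic_map (subtopology (subtopology X (T j)) U) (top_of_set (\<phi> ` U)) \<phi>"
      by (auto simp: is_chart_def)
    have UT: "U \<subseteq> T j" using openin_subset[OF U1] topT[OF j] by simp
    have U: "openin X U" using openin_trans_full[OF U1] assms(4) j by blast
    have "subtopology (subtopology X (T j)) U = subtopology X U"
      using UT by (simp add: subtopology_subtopology Int_absorb1)
    then have hom: "homeomorphic_map (subtopology X U) (top_of_set (\<phi> ` U)) \<phi>" using hom1 by simp
    have Cf: "C1_on (f \<circ> inv_into U \<phi>) (\<phi> ` U)"
      using assms(6) j c unfolding C1_map_def cdef by fastforce
    have Cfs: "C1_on (fs n \<circ> inv_into U \<phi>) (\<phi> ` U)" for n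
      using assms(7) j c unfolding C1_map_def cdef by fastforce
    have inj: "inj_on (fs 0) U" using assms(8) Tsub[OF j] UT by (meson inj_on_subset order_trans)
    have "\<exists>B. negligible B \<and> goodB X f fs U B"
      by (rule chart_lemma[of X U V \<phi> f fs, OF U V WV Wo hom Cf Cfs inj]) (use assms(9) in blast)
    then show ?thesis by (simp add: cdef)
  qed
  define Bad :: "'a set \<times> 'n set \<times> ('a \<Rightarrow> 'n) \<Rightarrow> (real^'l) set" where "Bad c = (SOME B. negligible B \<and> goodB X f fs (fst c) B)" for c
  have Bad: "negligible (Bad c) \<and> goodB X f fs (fst c) (Bad c)" if "j \<in> J" "c \<in> A j" for j c
    unfolding Bad_def by (rule someI_ex[OF chart[OF that]])
  have "\<exists>C. countable C \<and> C \<subseteq> A j \<and> T j \<subseteq> \<Union>(fst ` C)" if j: "j \<in> J" for j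
  proof -
    have man: "C1_manifold (subtopology X (T j)) (A j)" using assms(5) j by blast
    then have "Lindelof_space (subtopology X (T j))"
      by (simp add: C1_manifold_def second_countable_imp_Lindelof_space)
    moreover have "\<forall>U\<in>fst ` A j. openin (subtopology X (T j)) U"
      using man by (auto simp: C1_manifold_def C1_atlas_def is_chart_def)
    moreover have "topspace (subtopology X (T j)) \<subseteq> \<Union>(fst ` A j)"
      using man by (auto simp: C1_manifold_def C1_atlas_def)
    ultimately have "\<exists>\<V>. countable \<V> \<and> \<V> \<subseteq> fst ` A j \<and> topspace (subtopology X (T j)) \<subseteq> \<Union>\<V>"
      unfolding Lindelof_space_alt by (simp only:)
    then obtain \<V> where V1: "countable \<V>" "\<V> \<subseteq> fst ` A j" "topspace (subtopology X (T j)) \<subseteq> \<Union>\<V>"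
      by (elim exE conjE) simp
    have "\<exists>C. countable C \<and> C \<subseteq> A j \<and> \<V> = fst ` C"
      using countable_subset_image[of \<V> fst "A j"] V1(1,2) by (simp only: simp_thms)
    then obtain C where C: "countable C" "C \<subseteq> A j" "\<V> = fst ` C"
      by (elim exE conjE) simp
    have "T j \<subseteq> \<Union>(fst ` C)" using V1(3) C(3) topT[OF j] by simp
    then show ?thesis using C(1,2) by blast
  qed
  then have "\<forall>j\<in>J. \<exists>C. countable C \<and> C \<subseteq> A j \<and> T j \<subseteq> \<Union>(fst ` C)" by blast
  then obtain Cs where Cs0: "\<forall>j\<in>J. countable (Cs j) \<and> Cs j \<subseteq> A j \<and> T j \<subseteq> \<Union>(fst ` Cs j)"
    by (rule bchoice[THEN exE])
  have Cs: "countable (Cs j)" "Cs j \<subseteq> A j" "T j \<subseteq> \<Union>(fst ` Cs j)" if "j \<in> J" for j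
    using Cs0 that by auto
  define \<T> where "\<T> = Bad ` (\<Union>j\<in>J. Cs j)"
  have "countable \<T>" unfolding \<T>_def
    by (intro countable_image countable_UN[OF assms(1)] Cs(1))
  moreover have "negligible S" if Sin: "S \<in> \<T>" for S
  proof -
    obtain j c where jc: "j \<in> J" "c \<in> Cs j" "S = Bad c" using Sin unfolding \<T>_def by blast
    then have "c \<in> A j" using Cs(2) by blast
    then show ?thesis using Bad[OF jc(1)] jc(3) by simp
  qed
  ultimately have negT: "negligible (\<Union>\<T>)" by (rule negligible_countable_Union)
  have key: "\<forall>Ob. openin X Ob \<and> t \<in> Ob \<longrightarrow> (\<exists>K. compactin X K \<and> K \<subseteq> Ob \<and> (\<forall>\<^sub>F n in sequentially. f t \<in> fs n ` K))"
    if t: "t \<in> topspace X" and nt: "f t \<notin> \<Union>\<T>" for t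
  proof -
    obtain j where j: "j \<in> J" "t \<in> T j" using t assms(3) by blast
    then obtain c where c: "c \<in> Cs j" "t \<in> fst c" using Cs(3)[OF j(1)] by blast
    have cA: "c \<in> A j" using c(1) Cs(2)[OF j(1)] by blast
    have "Bad c \<in> \<T>" unfolding \<T>_def using c j by blast
    then have "f t \<notin> Bad c" using nt by blast
    moreover have "goodB X f fs (fst c) (Bad c)" using Bad[OF j(1) cA] by simp
    ultimately show ?thesis using c(2) unfolding goodB_def by simp
  qed
  have sep: "\<exists>O1 O2. openin X O1 \<and> openin X O2 \<and> t1 \<in> O1 \<and> t2 \<in> O2 \<and> O1 \<inter> O2 = {}"
    if tt: "t1 \<in> topspace X" "t2 \<in> topspace X" "t1 \<noteq> t2" for t1 t2
  proof -
    obtain j1 where j1: "j1 \<in> J" "t1 \<in> T j1" using tt(1) assms(3) by blast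
    obtain j2 where j2: "j2 \<in> J" "t2 \<in> T j2" using tt(2) assms(3) by blast
    show ?thesis
    proof (cases "j1 = j2")
      case True
      have HS: "Hausdorff_space (subtopology X (T j1))" using assms(5) j1 by (simp add: C1_manifold_def)
      have mem: "t1 \<in> topspace (subtopology X (T j1)) \<and> t2 \<in> topspace (subtopology X (T j1)) \<and> t1 \<noteq> t2"
        using j1 j2 True topT[OF j1(1)] \<open>t1 \<noteq> t2\<close> by simp
      have "\<exists>U V. openin (subtopology X (T j1)) U \<and> openin (subtopology X (T j1)) V \<and> t1 \<in> U \<and> t2 \<in> V \<and> disjnt U V"
        using HS[unfolded Hausdorff_space_def, rule_format, OF mem] .
      then obtain O1 O2 where O12: "openin (subtopology X (T j1)) O1" "openin (subtopology X (T j1)) O2"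
        "t1 \<in> O1" "t2 \<in> O2" "disjnt O1 O2"
        by (elim exE conjE) simp
      have TO: "openin X (T j1)" using assms(4) j1 by blast
      have "openin X O1" by (rule openin_trans_full[OF O12(1) TO])
      moreover have "openin X O2" by (rule openin_trans_full[OF O12(2) TO])
      moreover have "O1 \<inter> O2 = {}" using O12(5) by (simp add: disjnt_def)
      ultimately show ?thesis using O12(3,4) by (intro exI[of _ O1] exI[of _ O2] conjI)
    next
      case False
      then have "T j1 \<inter> T j2 = {}" using assms(2) j1 j2 by (simp add: disjoint_family_on_def)
      moreover have "openin X (T j1)" "openin X (T j2)" using assms(4) j1(1) j2(1) by auto
      ultimately show ?thesis using j1(2) j2(2) by (intro exI[of _ "T j1"] exI[of _ "T j2"] conjI)
    qed
  qed
  have "noninvertible_values (topspace X) f \<subseteq> \<Union>\<T>"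
  proof
    fix u assume "u \<in> noninvertible_values (topspace X) f"
    then obtain t1 t2 where t: "t1 \<in> topspace X" "t2 \<in> topspace X" "t1 \<noteq> t2" "f t1 = u" "f t2 = u"
      by (auto simp: noninvertible_values_def)
    show "u \<in> \<Union>\<T>"
    proof (rule ccontr)
      assume nu: "u \<notin> \<Union>\<T>"
      obtain O1 O2 where O: "openin X O1" "openin X O2" "t1 \<in> O1" "t2 \<in> O2" "O1 \<inter> O2 = {}"
        using sep[OF t(1-3)] by blast
      obtain K1 where K1: "compactin X K1" "K1 \<subseteq> O1" "\<forall>\<^sub>F n in sequentially. f t1 \<in> fs n ` K1"
        using key[OF t(1)] nu t(4) O(1,3) by auto
      obtain K2 where K2: "compactin X K2" "K2 \<subseteq> O2" "\<forall>\<^sub>F n in sequentially. f t2 \<in> fs n ` K2"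
        using key[OF t(2)] nu t(5) O(2,4) by auto
      have "\<forall>\<^sub>F n in sequentially. u \<in> fs n ` K1 \<and> u \<in> fs n ` K2"
        using eventually_conj[OF K1(3) K2(3)] t(4,5) by simp
      then obtain N where "\<forall>n\<ge>N. u \<in> fs n ` K1 \<and> u \<in> fs n ` K2"
        unfolding eventually_sequentially by blast
      then have "u \<in> fs N ` K1" "u \<in> fs N ` K2" by auto
      then obtain p q where pq: "p \<in> K1" "q \<in> K2" "fs N p = u" "fs N q = u" by auto
      have "p \<in> topspace X" "q \<in> topspace X"
        using pq K1(1) K2(1) compactin_subset_topspace by blast+
      then have "p = q" using pq(3,4) inj_onD[of "fs N" "topspace X" p q] assms(8) by simp
      then show False using pq K1(2) K2(2) O(5) by blast
    qed
  qed
  then have "negligible (noninvertible_values (topspace X) f)"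
    using negT negligible_subset by blast
  then show ?thesis by (simp add: negligible_iff_null_sets)
qed

end
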